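(* Let $G_1$ and $G_2$ be two vertex-disjoint finite connected simple graphs, each having at least one edge. Then $\mathcal{NC}(G_1\sqcup G_2)\simeq\Sigma\big(\mathcal{NC}(G_1)\ast\mathcal{NC}(G_2)\big)$ (homotopy equivalence of geometric realizations), where $\Sigma$ denotes suspension.
   Context: For a finite simple graph $G$, a set $S\subseteq V(G)$ is a cover of $G$ if $V(G)\setminus S$ is an independent set (contains no edge of $G$). The non-cover complex $\mathcal{NC}(G)$ is the simplicial complex whose simplices are the subsets $S\subseteq V(G)$ that are not covers, i.e. such that $V(G)\setminus S$ contains both endpoints of some edge of $G$. The join $K_1\ast K_2$ of complexes on disjoint vertex sets has simplices $\sigma\sqcup\tau$, $\sigma\in K_1,\tau\in K_2$. $G_1\sqcup G_2$ is the disjoint union of graphs. *)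

theory Defs
  imports "HOL-Analysis.Analysis"
begin

definition simple_graph :: "'a set \<Rightarrow> 'a set set \<Rightarrow> bool" where
  "simple_graph V E \<longleftrightarrow> finite V \<and> (\<forall>e\<in>E. e \<subseteq> V \<and> card e = 2)"

definition adj :: "'a set set \<Rightarrow> 'a \<Rightarrow> 'a \<Rightarrow> bool" where
  "adj E u v \<longleftrightarrow> {u, v} \<in> E"

definition connected_graph :: "'a set \<Rightarrow> 'a set set \<Rightarrow> bool" where
  "connected_graph V E \<longleftrightarrow> V \<noteq> {} \<and> (\<forall>u\<in>V. \<forall>v\<in>V. (adj E)\<^sup>*\<^sup>* u v)"

definition dunion_V :: "'a set \<Rightarrow> 'b set \<Rightarrow> ('a + 'b) set" where
  "dunion_V V1 V2 = Inl ` V1 \<union> Inr ` V2"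

definition dunion_E :: "'a set set \<Rightarrow> 'b set set \<Rightarrow> ('a + 'b) set set" where
  "dunion_E E1 E2 = (image Inl) ` E1 \<union> (image Inr) ` E2"

definition non_cover_complex :: "'a set \<Rightarrow> 'a set set \<Rightarrow> 'a set set" where
  "non_cover_complex V E = {S. S \<subseteq> V \<and> (\<exists>e\<in>E. e \<subseteq> V - S)}"

definition cjoin :: "'a set set \<Rightarrow> 'b set set \<Rightarrow> ('a + 'b) set set" where
  "cjoin K1 K2 = {Inl ` \<sigma> \<union> Inr ` \<tau> | \<sigma> \<tau>. \<sigma> \<in> K1 \<and> \<tau> \<in> K2}"

definition sphere0 :: "bool set set" where
  "sphere0 = {{}, {True}, {False}}"

definition csusp :: "'a set set \<Rightarrow> ('a + bool) set set" where
  "csusp K = cjoin K sphere0"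

text \<open>Geometric realization of a (finite-simplex) simplicial complex K, as the set of
  barycentric-coordinate functions supported on a simplex of K, with the subspace
  topology of the product topology on 'v \<Rightarrow> real.\<close>
definition geom_real_set :: "'v set set \<Rightarrow> ('v \<Rightarrow> real) set" where
  "geom_real_set K = {f. (\<forall>v. 0 \<le> f v) \<and> {v. f v \<noteq> 0} \<in> K \<and> finite {v. f v \<noteq> 0}
                        \<and> sum f {v. f v \<noteq> 0} = 1}"

definition geom_real :: "'v set set \<Rightarrow> ('v \<Rightarrow> real) topology" where
  "geom_real K = top_of_set (geom_real_set K)"

end

theory Submission
  imports Defs
begin


definition qq :: "('c \<Rightarrow> 'v) \<Rightarrow> 'c set set \<Rightarrow> ('v \<Rightarrow> real) \<Rightarrow> real" where
 "qq j E x = Min ((\<lambda>e. Max ((\<lambda>u. x (j u)) ` e)) ` E)"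

definition goodE :: "'c set set \<Rightarrow> bool" where
 "goodE E \<longleftrightarrow> finite E \<and> E \<noteq> {} \<and> (\<forall>e\<in>E. finite e \<and> e \<noteq> {})"

lemma qq_ge:
  assumes "goodE E" "\<And>e u. e \<in> E \<Longrightarrow> u \<in> e \<Longrightarrow> c \<le> x (j u)"
  shows "c \<le> qq j E x"
  using assms unfolding qq_def goodE_def
  by (subst Min_ge_iff) (auto simp: Max_ge_iff)

lemma qq_le:
  assumes "goodE E" "e \<in> E" "\<And>u. u \<in> e \<Longrightarrow> x (j u) \<le> c"
  shows "qq j E x \<le> c"
  using assms unfolding qq_def goodE_def
  by (subst Min_le_iff) (auto simp: Max_le_iff)

lemma qq_attain:
  assumes "goodE E"
  shows "\<exists>e\<in>E. \<forall>u\<in>e. x (j u) \<le> qq j E x"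
proof -
  have "qq j E x \<in> (\<lambda>e. Max ((\<lambda>u. x (j u)) ` e)) ` E"
    using assms unfolding qq_def goodE_def by (intro Min_in) auto
  then obtain e where e: "e \<in> E" "qq j E x = Max ((\<lambda>u. x (j u)) ` e)" by auto
  have "\<forall>u\<in>e. x (j u) \<le> qq j E x"
    using assms e unfolding goodE_def by auto
  with e show ?thesis by blast
qed

lemma cont_Min:
  assumes "finite I" "I \<noteq> {}" "\<And>i. i \<in> I \<Longrightarrow> continuous_on S (f i)"
  shows "continuous_on S (\<lambda>x. Min ((\<lambda>i. f i x :: real) ` I))"
  using assms
proof (induction I rule: finite_ne_induct)
  case (singleton a) then show ?case by simp
next
  case (insert a F)
  have "continuous_on S (\<lambda>x. min (f a x) (Min ((\<lambda>i. f i x) ` F)))"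
    using insert by (intro continuous_intros) auto
  moreover have "\<And>x. Min ((\<lambda>i. f i x) ` insert a F) = min (f a x) (Min ((\<lambda>i. f i x) ` F))"
    using insert by (simp add: Min_insert)
  ultimately show ?case by simp
qed

lemma cont_Max:
  assumes "finite I" "I \<noteq> {}" "\<And>i. i \<in> I \<Longrightarrow> continuous_on S (f i)"
  shows "continuous_on S (\<lambda>x. Max ((\<lambda>i. f i x :: real) ` I))"
  using assms
proof (induction I rule: finite_ne_induct)
  case (singleton a) then show ?case by simp
next
  case (insert a F)
  have "continuous_on S (\<lambda>x. max (f a x) (Max ((\<lambda>i. f i x) ` F)))"
    using insert by (intro continuous_intros) auto
  moreover have "\<And>x. Max ((\<lambda>i. f i x) ` insert a F) = max (f a x) (Max ((\<lambda>i. f i x) ` F))"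
    using insert by (simp add: Max_insert)
  ultimately show ?case by simp
qed

lemma cont_coord: "continuous_on S (\<lambda>x. x v :: real)"
  by (rule continuous_on_subset[OF continuous_on_product_coordinates]) auto

lemma cont_qq:
  assumes "goodE E" shows "continuous_on S (qq j E)"
proof -
  have "continuous_on S (\<lambda>x. Min ((\<lambda>e. Max ((\<lambda>u. x (j u)) ` e)) ` E))"
    using assms unfolding goodE_def
    by (intro cont_Min cont_Max cont_coord) auto
  then show ?thesis unfolding qq_def[abs_def] by simp
qed



lemma sum_dunion:
  assumes "finite V1" "finite V2"
  shows "sum x (dunion_V V1 V2) = sum (\<lambda>u. x (Inl u)) V1 + sum (\<lambda>u. x (Inr u)) V2"
proof -
  have "sum x (Inl ` V1 \<union> Inr ` V2) = sum x (Inl ` V1) + sum x (Inr ` V2)"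
    using assms by (intro sum.union_disjoint) auto
  also have "\<dots> = sum (\<lambda>u. x (Inl u)) V1 + sum (\<lambda>u. x (Inr u)) V2"
    by (simp add: sum.reindex)
  finally show ?thesis by (simp add: dunion_V_def)
qed

lemma mem_K:
  assumes "finite V1" "finite V2" "\<forall>e\<in>E1. e \<subseteq> V1" "\<forall>e\<in>E2. e \<subseteq> V2"
  shows "x \<in> geom_real_set (non_cover_complex (dunion_V V1 V2) (dunion_E E1 E2)) \<longleftrightarrow>
    (\<forall>v. 0 \<le> x v) \<and> (\<forall>v. x v \<noteq> 0 \<longrightarrow> v \<in> dunion_V V1 V2) \<and>
    sum (\<lambda>u. x (Inl u)) V1 + sum (\<lambda>u. x (Inr u)) V2 = 1 \<and>
    ((\<exists>e\<in>E1. \<forall>u\<in>e. x (Inl u) = 0) \<or> (\<exists>e\<in>E2. \<forall>u\<in>e. x (Inr u) = 0))"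
    (is "?L \<longleftrightarrow> ?R")
proof -
  let ?V = "dunion_V V1 V2"
  have fV: "finite ?V" using assms by (simp add: dunion_V_def)
  have sumeq: "sum x {v. x v \<noteq> 0} = sum x ?V" if "{v. x v \<noteq> 0} \<subseteq> ?V"
    using that fV by (intro sum.mono_neutral_left) auto
  have edge: "(\<exists>e\<in>dunion_E E1 E2. e \<subseteq> ?V - {v. x v \<noteq> 0}) \<longleftrightarrow>
     ((\<exists>e\<in>E1. \<forall>u\<in>e. x (Inl u) = 0) \<or> (\<exists>e\<in>E2. \<forall>u\<in>e. x (Inr u) = 0))"
  proof
    assume "\<exists>e\<in>dunion_E E1 E2. e \<subseteq> ?V - {v. x v \<noteq> 0}"
    then show "(\<exists>e\<in>E1. \<forall>u\<in>e. x (Inl u) = 0) \<or> (\<exists>e\<in>E2. \<forall>u\<in>e. x (Inr u) = 0)"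
      unfolding dunion_E_def by blast
  next
    assume "(\<exists>e\<in>E1. \<forall>u\<in>e. x (Inl u) = 0) \<or> (\<exists>e\<in>E2. \<forall>u\<in>e. x (Inr u) = 0)"
    then show "\<exists>e\<in>dunion_E E1 E2. e \<subseteq> ?V - {v. x v \<noteq> 0}"
    proof
      assume "\<exists>e\<in>E1. \<forall>u\<in>e. x (Inl u) = 0"
      then obtain e where "e \<in> E1" "\<forall>u\<in>e. x (Inl u) = 0" by blast
      then show ?thesis using assms unfolding dunion_E_def dunion_V_def
        by (intro bexI[of _ "Inl ` e"]) fastforce+
    next
      assume "\<exists>e\<in>E2. \<forall>u\<in>e. x (Inr u) = 0"
      then obtain e where "e \<in> E2" "\<forall>u\<in>e. x (Inr u) = 0" by blast
      then show ?thesis using assms unfolding dunion_E_def dunion_V_def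
        by (intro bexI[of _ "Inr ` e"]) fastforce+
    qed
  qed
  show ?thesis
  proof
    assume L: ?L
    then have sub: "{v. x v \<noteq> 0} \<subseteq> ?V"
      unfolding geom_real_set_def non_cover_complex_def by auto
    show ?R using L sub sumeq[OF sub] edge sum_dunion[OF assms(1,2), of x]
      unfolding geom_real_set_def non_cover_complex_def by auto
  next
    assume R: ?R
    then have sub: "{v. x v \<noteq> 0} \<subseteq> ?V" by auto
    show ?L using R sub sumeq[OF sub] edge sum_dunion[OF assms(1,2), of x] finite_subset[OF sub fV]
      unfolding geom_real_set_def non_cover_complex_def by auto
  qed
qed

lemma sum_W:
  fixes y :: "('a + 'b) + bool \<Rightarrow> real"
  assumes "finite V1" "finite V2"
  defines "W \<equiv> Inl ` dunion_V V1 V2 \<union> Inr ` UNIV"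
  shows "sum y W = sum (\<lambda>u. y (Inl (Inl u))) V1 + sum (\<lambda>u. y (Inl (Inr u))) V2 + y (Inr True) + y (Inr False)"
proof -
  have "sum y W = sum y (Inl ` dunion_V V1 V2) + sum y (Inr ` UNIV)"
    unfolding W_def using assms by (intro sum.union_disjoint) (auto simp: dunion_V_def)
  also have "sum y (Inl ` dunion_V V1 V2) = sum (\<lambda>v. y (Inl v)) (dunion_V V1 V2)"
    by (simp add: sum.reindex)
  also have "\<dots> = sum (\<lambda>u. y (Inl (Inl u))) V1 + sum (\<lambda>u. y (Inl (Inr u))) V2"
    using sum_dunion[OF assms(1,2)] by simp
  also have "sum y (Inr ` UNIV) = y (Inr True) + y (Inr False)"
    by (simp add: sum.reindex UNIV_bool)
  finally show ?thesis by simp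
qed

lemma cjoin_I: "s \<in> K1 \<Longrightarrow> t \<in> K2 \<Longrightarrow> Inl ` s \<union> Inr ` t \<in> cjoin K1 K2"
  unfolding cjoin_def by blast
lemma cjoin_E: assumes "X \<in> cjoin K1 K2" obtains s t where "X = Inl ` s \<union> Inr ` t" "s \<in> K1" "t \<in> K2"
  using assms unfolding cjoin_def by blast

lemma mem_S:
  assumes "finite V1" "finite V2" "\<forall>e\<in>E1. e \<subseteq> V1" "\<forall>e\<in>E2. e \<subseteq> V2"
  shows "y \<in> geom_real_set (csusp (cjoin (non_cover_complex V1 E1) (non_cover_complex V2 E2))) \<longleftrightarrow>
    (\<forall>w. 0 \<le> y w) \<and> (\<forall>u. y (Inl (Inl u)) \<noteq> 0 \<longrightarrow> u \<in> V1) \<and> (\<forall>u. y (Inl (Inr u)) \<noteq> 0 \<longrightarrow> u \<in> V2) \<and>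
    sum (\<lambda>u. y (Inl (Inl u))) V1 + sum (\<lambda>u. y (Inl (Inr u))) V2 + y (Inr True) + y (Inr False) = 1 \<and>
    (\<exists>e\<in>E1. \<forall>u\<in>e. y (Inl (Inl u)) = 0) \<and> (\<exists>e\<in>E2. \<forall>u\<in>e. y (Inl (Inr u)) = 0) \<and>
    (y (Inr True) = 0 \<or> y (Inr False) = 0)"
    (is "?L \<longleftrightarrow> ?R")
proof -
  let ?W = "Inl ` dunion_V V1 V2 \<union> Inr ` UNIV :: (('a+'b)+bool) set"
  have fW: "finite ?W" using assms by (simp add: dunion_V_def)
  have sumeq: "sum y {v. y v \<noteq> 0} = sum y ?W" if "{v. y v \<noteq> 0} \<subseteq> ?W"
    using that fW by (intro sum.mono_neutral_left) auto
  let ?s1 = "{u. y (Inl (Inl u)) \<noteq> 0}" and ?s2 = "{u. y (Inl (Inr u)) \<noteq> 0}" and ?r = "{b. y (Inr b) \<noteq> 0}"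
  have memC: "{v. y v \<noteq> 0} \<in> csusp (cjoin (non_cover_complex V1 E1) (non_cover_complex V2 E2)) \<longleftrightarrow>
      ?s1 \<in> non_cover_complex V1 E1 \<and> ?s2 \<in> non_cover_complex V2 E2 \<and> ?r \<in> sphere0"
  proof
    assume "{v. y v \<noteq> 0} \<in> csusp (cjoin (non_cover_complex V1 E1) (non_cover_complex V2 E2))"
    then obtain sg r where eq0: "{v. y v \<noteq> 0} = Inl ` sg \<union> Inr ` r"
      and m0: "sg \<in> cjoin (non_cover_complex V1 E1) (non_cover_complex V2 E2)" "r \<in> sphere0"
      unfolding csusp_def by (rule cjoin_E)
    obtain s1 s2 where eq1: "sg = Inl ` s1 \<union> Inr ` s2"
      and m1: "s1 \<in> non_cover_complex V1 E1" "s2 \<in> non_cover_complex V2 E2"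
      using m0(1) by (rule cjoin_E)
    have eq: "{v. y v \<noteq> 0} = Inl ` (Inl ` s1 \<union> Inr ` s2) \<union> Inr ` r" using eq0 eq1 by simp
    have m: "s1 \<in> non_cover_complex V1 E1" "s2 \<in> non_cover_complex V2 E2" "r \<in> sphere0"
      using m0 m1 by auto
    have E: "\<And>v. (y v \<noteq> 0) = (v \<in> Inl ` (Inl ` s1 \<union> Inr ` s2) \<union> Inr ` r)"
      using eq by blast
    have "?s1 = s1"
    proof (rule set_eqI)
      fix u show "u \<in> ?s1 \<longleftrightarrow> u \<in> s1" using E[of "Inl (Inl u)"] by auto
    qed
    moreover have "?s2 = s2"
    proof (rule set_eqI)
      fix u show "u \<in> ?s2 \<longleftrightarrow> u \<in> s2" using E[of "Inl (Inr u)"] by auto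
    qed
    moreover have "?r = r"
    proof (rule set_eqI)
      fix u show "u \<in> ?r \<longleftrightarrow> u \<in> r" using E[of "Inr u"] by auto
    qed
    ultimately show "?s1 \<in> non_cover_complex V1 E1 \<and> ?s2 \<in> non_cover_complex V2 E2 \<and> ?r \<in> sphere0"
      using m by simp
  next
    assume m: "?s1 \<in> non_cover_complex V1 E1 \<and> ?s2 \<in> non_cover_complex V2 E2 \<and> ?r \<in> sphere0"
    have e: "{v. y v \<noteq> 0} = Inl ` (Inl ` ?s1 \<union> Inr ` ?s2) \<union> Inr ` ?r"
    proof (rule set_eqI)
      fix v show "v \<in> {v. y v \<noteq> 0} \<longleftrightarrow> v \<in> Inl ` (Inl ` ?s1 \<union> Inr ` ?s2) \<union> Inr ` ?r"
      proof (cases v)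
        case (Inl w) then show ?thesis by (cases w) auto
      qed auto
    qed
    show "{v. y v \<noteq> 0} \<in> csusp (cjoin (non_cover_complex V1 E1) (non_cover_complex V2 E2))"
      unfolding csusp_def e using m by (intro cjoin_I) auto
  qed
  have sph: "?r \<in> sphere0 \<longleftrightarrow> (y (Inr True) = 0 \<or> y (Inr False) = 0)"
  proof -
    have "?r = (if y (Inr True) = 0 then {} else {True}) \<union> (if y (Inr False) = 0 then {} else {False})"
    proof (rule set_eqI)
      fix b show "b \<in> ?r \<longleftrightarrow> b \<in> (if y (Inr True) = 0 then {} else {True}) \<union> (if y (Inr False) = 0 then {} else {False})"
        by (cases b) auto
    qed
    then show ?thesis unfolding sphere0_def by auto
  qed
  have nc1: "?s1 \<in> non_cover_complex V1 E1 \<longleftrightarrow> (\<forall>u. y (Inl (Inl u)) \<noteq> 0 \<longrightarrow> u \<in> V1) \<and> (\<exists>e\<in>E1. \<forall>u\<in>e. y (Inl (Inl u)) = 0)"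
  proof -
    have "?s1 \<in> non_cover_complex V1 E1 \<longleftrightarrow> ?s1 \<subseteq> V1 \<and> (\<exists>e\<in>E1. e \<subseteq> V1 - ?s1)"
      unfolding non_cover_complex_def by (rule mem_Collect_eq)
    also have "(\<exists>e\<in>E1. e \<subseteq> V1 - ?s1) \<longleftrightarrow> (\<exists>e\<in>E1. \<forall>u\<in>e. y (Inl (Inl u)) = 0)"
      using assms(3) by blast
    finally show ?thesis by blast
  qed
  have nc2: "?s2 \<in> non_cover_complex V2 E2 \<longleftrightarrow> (\<forall>u. y (Inl (Inr u)) \<noteq> 0 \<longrightarrow> u \<in> V2) \<and> (\<exists>e\<in>E2. \<forall>u\<in>e. y (Inl (Inr u)) = 0)"
  proof -
    have "?s2 \<in> non_cover_complex V2 E2 \<longleftrightarrow> ?s2 \<subseteq> V2 \<and> (\<exists>e\<in>E2. e \<subseteq> V2 - ?s2)"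
      unfolding non_cover_complex_def by (rule mem_Collect_eq)
    also have "(\<exists>e\<in>E2. e \<subseteq> V2 - ?s2) \<longleftrightarrow> (\<exists>e\<in>E2. \<forall>u\<in>e. y (Inl (Inr u)) = 0)"
      using assms(4) by blast
    finally show ?thesis by blast
  qed
  have subiff: "{v. y v \<noteq> 0} \<subseteq> ?W \<longleftrightarrow> (\<forall>u. y (Inl (Inl u)) \<noteq> 0 \<longrightarrow> u \<in> V1) \<and> (\<forall>u. y (Inl (Inr u)) \<noteq> 0 \<longrightarrow> u \<in> V2)"
  proof
    assume "{v. y v \<noteq> 0} \<subseteq> ?W"
    then show "(\<forall>u. y (Inl (Inl u)) \<noteq> 0 \<longrightarrow> u \<in> V1) \<and> (\<forall>u. y (Inl (Inr u)) \<noteq> 0 \<longrightarrow> u \<in> V2)"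
      unfolding dunion_V_def by auto
  next
    assume a: "(\<forall>u. y (Inl (Inl u)) \<noteq> 0 \<longrightarrow> u \<in> V1) \<and> (\<forall>u. y (Inl (Inr u)) \<noteq> 0 \<longrightarrow> u \<in> V2)"
    show "{v. y v \<noteq> 0} \<subseteq> ?W"
    proof
      fix v assume "v \<in> {v. y v \<noteq> 0}"
      show "v \<in> ?W"
      proof (cases v)
        case (Inl w) then show ?thesis using a \<open>v \<in> {v. y v \<noteq> 0}\<close> unfolding dunion_V_def by (cases w) auto
      qed auto
    qed
  qed
  show ?thesis
  proof
    assume L: ?L
    then have C: "{v. y v \<noteq> 0} \<in> csusp (cjoin (non_cover_complex V1 E1) (non_cover_complex V2 E2))"
      and nn: "\<forall>w. 0 \<le> y w" and s1: "sum y {v. y v \<noteq> 0} = 1"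
      unfolding geom_real_set_def by blast+
    have A: "?s1 \<in> non_cover_complex V1 E1" "?s2 \<in> non_cover_complex V2 E2" "?r \<in> sphere0"
      using memC C by blast+
    have n1: "(\<forall>u. y (Inl (Inl u)) \<noteq> 0 \<longrightarrow> u \<in> V1) \<and> (\<exists>e\<in>E1. \<forall>u\<in>e. y (Inl (Inl u)) = 0)"
      using A(1) nc1 by blast
    have n2: "(\<forall>u. y (Inl (Inr u)) \<noteq> 0 \<longrightarrow> u \<in> V2) \<and> (\<exists>e\<in>E2. \<forall>u\<in>e. y (Inl (Inr u)) = 0)"
      using A(2) nc2 by blast
    have n3: "y (Inr True) = 0 \<or> y (Inr False) = 0" using A(3) sph by blast
    have sub: "{v. y v \<noteq> 0} \<subseteq> ?W" using subiff n1 n2 by blast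
    have "sum y ?W = 1" using sumeq[OF sub] s1 by simp
    then have s: "sum (\<lambda>u. y (Inl (Inl u))) V1 + sum (\<lambda>u. y (Inl (Inr u))) V2 + y (Inr True) + y (Inr False) = 1"
      using sum_W[OF assms(1,2), of y] by simp
    show ?R using nn n1 n2 n3 s by blast
  next
    assume R: ?R
    then have sub: "{v. y v \<noteq> 0} \<subseteq> ?W" using subiff by blast
    have n1: "?s1 \<in> non_cover_complex V1 E1" using R nc1 by blast
    have n2: "?s2 \<in> non_cover_complex V2 E2" using R nc2 by blast
    have n3: "?r \<in> sphere0" using R sph by blast
    have C: "{v. y v \<noteq> 0} \<in> csusp (cjoin (non_cover_complex V1 E1) (non_cover_complex V2 E2))"
      using n1 n2 n3 memC by blast
    have "sum y ?W = 1" using R sum_W[OF assms(1,2), of y] by simp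
    then have "sum y {v. y v \<noteq> 0} = 1" using sumeq[OF sub] by simp
    moreover have "finite {v. y v \<noteq> 0}" using finite_subset[OF sub fW] .
    ultimately show ?L using R C unfolding geom_real_set_def by blast
  qed
qed



lemma lin: "(\<Sum>u\<in>V. a * f u + b * g u) = a * sum f V + b * (sum g V :: real)"
  by (simp add: sum.distrib sum_distrib_left)

lemma mm: "max 0 (a - q) + min a q = (a::real)" by simp

locale twog =
  fixes V1 :: "'a set" and E1 :: "'a set set" and V2 :: "'b set" and E2 :: "'b set set"
  assumes fV1: "finite V1" and fV2: "finite V2" and g1: "goodE E1" and g2: "goodE E2"
    and s1: "\<forall>e\<in>E1. e \<subseteq> V1" and s2: "\<forall>e\<in>E2. e \<subseteq> V2" and n1: "V1 \<noteq> {}" and n2: "V2 \<noteq> {}"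
begin

definition F :: "('a + 'b \<Rightarrow> real) \<Rightarrow> ('a + 'b) + bool \<Rightarrow> real" where
  "F x = (\<lambda>w. case w of Inl (Inl u) \<Rightarrow> max 0 (x (Inl u) - qq Inl E1 x)
      | Inl (Inr u) \<Rightarrow> max 0 (x (Inr u) - qq Inr E2 x)
      | Inr b \<Rightarrow> (if b then (\<Sum>u\<in>V2. min (x (Inr u)) (qq Inr E2 x)) else (\<Sum>u\<in>V1. min (x (Inl u)) (qq Inl E1 x))))"

lemma F_simps:
  "F x (Inl (Inl u)) = max 0 (x (Inl u) - qq Inl E1 x)"
  "F x (Inl (Inr u')) = max 0 (x (Inr u') - qq Inr E2 x)"
  "F x (Inr True) = (\<Sum>u\<in>V2. min (x (Inr u)) (qq Inr E2 x))"
  "F x (Inr False) = (\<Sum>u\<in>V1. min (x (Inl u)) (qq Inl E1 x))"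
  by (simp_all add: F_def)

definition Gm :: "(('a + 'b) + bool \<Rightarrow> real) \<Rightarrow> 'a + 'b \<Rightarrow> real" where
  "Gm y = (\<lambda>v. case v of Inl u \<Rightarrow> y (Inl (Inl u)) + (if u \<in> V1 then y (Inr False) / real (card V1) else 0)
      | Inr u \<Rightarrow> y (Inl (Inr u)) + (if u \<in> V2 then y (Inr True) / real (card V2) else 0))"

lemma G_simps:
  "Gm y (Inl u) = y (Inl (Inl u)) + (if u \<in> V1 then y (Inr False) / real (card V1) else 0)"
  "Gm y (Inr u') = y (Inl (Inr u')) + (if u' \<in> V2 then y (Inr True) / real (card V2) else 0)"
  by (simp_all add: Gm_def)

abbreviation "KK \<equiv> geom_real_set (non_cover_complex (dunion_V V1 V2) (dunion_E E1 E2))"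
abbreviation "SS \<equiv> geom_real_set (csusp (cjoin (non_cover_complex V1 E1) (non_cover_complex V2 E2)))"

lemmas memK = mem_K[OF fV1 fV2 s1 s2]
lemmas memS = mem_S[OF fV1 fV2 s1 s2]

lemma c1: "card V1 > 0" using fV1 n1 by (simp add: card_gt_0_iff)
lemma c2: "card V2 > 0" using fV2 n2 by (simp add: card_gt_0_iff)

lemma F_mem:
  assumes x: "x \<in> KK" shows "F x \<in> SS"
proof -
  have nn: "\<forall>v. 0 \<le> x v" and sp: "\<forall>v. x v \<noteq> 0 \<longrightarrow> v \<in> dunion_V V1 V2"
    and sm: "sum (\<lambda>u. x (Inl u)) V1 + sum (\<lambda>u. x (Inr u)) V2 = 1"
    and ed: "(\<exists>e\<in>E1. \<forall>u\<in>e. x (Inl u) = 0) \<or> (\<exists>e\<in>E2. \<forall>u\<in>e. x (Inr u) = 0)"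
    using x memK by blast+
  let ?q1 = "qq Inl E1 x" and ?q2 = "qq Inr E2 x"
  have q1: "0 \<le> ?q1" using nn by (intro qq_ge[OF g1]) auto
  have q2: "0 \<le> ?q2" using nn by (intro qq_ge[OF g2]) auto
  have A: "\<forall>w. 0 \<le> F x w"
  proof
    fix w show "0 \<le> F x w"
    proof (cases w)
      case (Inl w') then show ?thesis by (cases w') (simp_all add: F_simps)
    next
      case (Inr b) then show ?thesis using nn q1 q2 by (cases b) (auto simp: F_simps intro!: sum_nonneg)
    qed
  qed
  have B1: "\<forall>u. F x (Inl (Inl u)) \<noteq> 0 \<longrightarrow> u \<in> V1"
  proof (intro allI impI)
    fix u assume "F x (Inl (Inl u)) \<noteq> 0"
    then have "x (Inl u) \<noteq> 0" using q1 by (auto simp: F_simps)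
    then show "u \<in> V1" using sp by (auto simp: dunion_V_def)
  qed
  have B2: "\<forall>u. F x (Inl (Inr u)) \<noteq> 0 \<longrightarrow> u \<in> V2"
  proof (intro allI impI)
    fix u assume "F x (Inl (Inr u)) \<noteq> 0"
    then have "x (Inr u) \<noteq> 0" using q2 by (auto simp: F_simps)
    then show "u \<in> V2" using sp by (auto simp: dunion_V_def)
  qed
  have C: "sum (\<lambda>u. F x (Inl (Inl u))) V1 + sum (\<lambda>u. F x (Inl (Inr u))) V2 + F x (Inr True) + F x (Inr False) = 1"
  proof -
    have "sum (\<lambda>u. F x (Inl (Inl u))) V1 + F x (Inr False) = sum (\<lambda>u. x (Inl u)) V1"
      by (simp add: F_simps sum.distrib[symmetric] mm)
    moreover have "sum (\<lambda>u. F x (Inl (Inr u))) V2 + F x (Inr True) = sum (\<lambda>u. x (Inr u)) V2"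
      by (simp add: F_simps sum.distrib[symmetric] mm)
    ultimately show ?thesis using sm by linarith
  qed
  have D1: "\<exists>e\<in>E1. \<forall>u\<in>e. F x (Inl (Inl u)) = 0"
  proof -
    obtain e where "e \<in> E1" "\<forall>u\<in>e. x (Inl u) \<le> ?q1" using qq_attain[OF g1] by blast
    then show ?thesis by (intro bexI[of _ e]) (auto simp: F_simps max_def)
  qed
  have D2: "\<exists>e\<in>E2. \<forall>u\<in>e. F x (Inl (Inr u)) = 0"
  proof -
    obtain e where "e \<in> E2" "\<forall>u\<in>e. x (Inr u) \<le> ?q2" using qq_attain[OF g2] by blast
    then show ?thesis by (intro bexI[of _ e]) (auto simp: F_simps max_def)
  qed
  have E: "F x (Inr True) = 0 \<or> F x (Inr False) = 0"
    using ed
  proof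
    assume "\<exists>e\<in>E1. \<forall>u\<in>e. x (Inl u) = 0"
    then obtain e where "e \<in> E1" "\<forall>u\<in>e. x (Inl u) = 0" by blast
    then have "?q1 \<le> 0" by (intro qq_le[OF g1]) auto
    then have "?q1 = 0" using q1 by simp
    then have "F x (Inr False) = 0" using nn by (simp add: F_simps min.absorb2)
    then show ?thesis by simp
  next
    assume "\<exists>e\<in>E2. \<forall>u\<in>e. x (Inr u) = 0"
    then obtain e where "e \<in> E2" "\<forall>u\<in>e. x (Inr u) = 0" by blast
    then have "?q2 \<le> 0" by (intro qq_le[OF g2]) auto
    then have "?q2 = 0" using q2 by simp
    then have "F x (Inr True) = 0" using nn by (simp add: F_simps min.absorb2)
    then show ?thesis by simp
  qed
  show ?thesis unfolding memS using A B1 B2 C D1 D2 E by blast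
qed


lemma G_mem:
  assumes y: "y \<in> SS" shows "Gm y \<in> KK"
proof -
  have nn: "\<forall>w. 0 \<le> y w" and sp1: "\<forall>u. y (Inl (Inl u)) \<noteq> 0 \<longrightarrow> u \<in> V1"
    and sp2: "\<forall>u. y (Inl (Inr u)) \<noteq> 0 \<longrightarrow> u \<in> V2"
    and sm: "sum (\<lambda>u. y (Inl (Inl u))) V1 + sum (\<lambda>u. y (Inl (Inr u))) V2 + y (Inr True) + y (Inr False) = 1"
    and e1: "\<exists>e\<in>E1. \<forall>u\<in>e. y (Inl (Inl u)) = 0" and e2: "\<exists>e\<in>E2. \<forall>u\<in>e. y (Inl (Inr u)) = 0"
    and ab: "y (Inr True) = 0 \<or> y (Inr False) = 0"
    using y memS by blast+
  have A: "\<forall>v. 0 \<le> Gm y v"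
  proof
    fix v show "0 \<le> Gm y v" using nn by (cases v) (auto simp: G_simps)
  qed
  have B: "\<forall>v. Gm y v \<noteq> 0 \<longrightarrow> v \<in> dunion_V V1 V2"
  proof (intro allI impI)
    fix v assume h: "Gm y v \<noteq> 0"
    show "v \<in> dunion_V V1 V2"
    proof (cases v)
      case (Inl u) then show ?thesis using h sp1 by (cases "u \<in> V1") (auto simp: G_simps dunion_V_def)
    next
      case (Inr u) then show ?thesis using h sp2 by (cases "u \<in> V2") (auto simp: G_simps dunion_V_def)
    qed
  qed
  have C: "sum (\<lambda>u. Gm y (Inl u)) V1 + sum (\<lambda>u. Gm y (Inr u)) V2 = 1"
  proof -
    have "sum (\<lambda>u. Gm y (Inl u)) V1 = sum (\<lambda>u. y (Inl (Inl u)) + y (Inr False) / real (card V1)) V1"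
      by (rule sum.cong) (auto simp: G_simps)
    also have "\<dots> = sum (\<lambda>u. y (Inl (Inl u))) V1 + y (Inr False)"
      using c1 by (simp add: sum.distrib)
    finally have 1: "sum (\<lambda>u. Gm y (Inl u)) V1 = sum (\<lambda>u. y (Inl (Inl u))) V1 + y (Inr False)" .
    have "sum (\<lambda>u. Gm y (Inr u)) V2 = sum (\<lambda>u. y (Inl (Inr u)) + y (Inr True) / real (card V2)) V2"
      by (rule sum.cong) (auto simp: G_simps)
    also have "\<dots> = sum (\<lambda>u. y (Inl (Inr u))) V2 + y (Inr True)"
      using c2 by (simp add: sum.distrib)
    finally have 2: "sum (\<lambda>u. Gm y (Inr u)) V2 = sum (\<lambda>u. y (Inl (Inr u))) V2 + y (Inr True)" .
    show ?thesis using 1 2 sm by linarith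
  qed
  have D: "(\<exists>e\<in>E1. \<forall>u\<in>e. Gm y (Inl u) = 0) \<or> (\<exists>e\<in>E2. \<forall>u\<in>e. Gm y (Inr u) = 0)"
    using ab
  proof
    assume a: "y (Inr True) = 0"
    from e2 obtain e where "e \<in> E2" "\<forall>u\<in>e. y (Inl (Inr u)) = 0" by blast
    then have "\<forall>u\<in>e. Gm y (Inr u) = 0" using a by (simp add: G_simps)
    then show ?thesis using \<open>e \<in> E2\<close> by blast
  next
    assume a: "y (Inr False) = 0"
    from e1 obtain e where "e \<in> E1" "\<forall>u\<in>e. y (Inl (Inl u)) = 0" by blast
    then have "\<forall>u\<in>e. Gm y (Inl u) = 0" using a by (simp add: G_simps)
    then show ?thesis using \<open>e \<in> E1\<close> by blast
  qed
  show ?thesis unfolding memK using A B C D by blast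
qed

lemma FG:
  assumes y: "y \<in> SS" shows "F (Gm y) = y"
proof -
  have nn: "\<forall>w. 0 \<le> y w" and sp1: "\<forall>u. y (Inl (Inl u)) \<noteq> 0 \<longrightarrow> u \<in> V1"
    and sp2: "\<forall>u. y (Inl (Inr u)) \<noteq> 0 \<longrightarrow> u \<in> V2"
    and e1: "\<exists>e\<in>E1. \<forall>u\<in>e. y (Inl (Inl u)) = 0" and e2: "\<exists>e\<in>E2. \<forall>u\<in>e. y (Inl (Inr u)) = 0"
    using y memS by blast+
  define k1 where "k1 = y (Inr False) / real (card V1)"
  define k2 where "k2 = y (Inr True) / real (card V2)"
  have k1: "0 \<le> k1" using nn by (simp add: k1_def)
  have k2: "0 \<le> k2" using nn by (simp add: k2_def)
  have q1: "qq Inl E1 (Gm y) = k1"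
  proof (rule antisym)
    from e1 obtain e where e: "e \<in> E1" "\<forall>u\<in>e. y (Inl (Inl u)) = 0" by blast
    show "qq Inl E1 (Gm y) \<le> k1"
      using e s1 by (intro qq_le[OF g1 e(1)]) (auto simp: G_simps k1_def)
    show "k1 \<le> qq Inl E1 (Gm y)"
      using nn s1 by (intro qq_ge[OF g1]) (auto simp: G_simps k1_def)
  qed
  have q2: "qq Inr E2 (Gm y) = k2"
  proof (rule antisym)
    from e2 obtain e where e: "e \<in> E2" "\<forall>u\<in>e. y (Inl (Inr u)) = 0" by blast
    show "qq Inr E2 (Gm y) \<le> k2"
      using e s2 by (intro qq_le[OF g2 e(1)]) (auto simp: G_simps k2_def)
    show "k2 \<le> qq Inr E2 (Gm y)"
      using nn s2 by (intro qq_ge[OF g2]) (auto simp: G_simps k2_def)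
  qed
  show ?thesis
  proof
    fix w show "F (Gm y) w = y w"
    proof (cases w)
      case (Inl w')
      then show ?thesis
      proof (cases w')
        case (Inl u)
        show ?thesis
        proof (cases "u \<in> V1")
          case True then show ?thesis using \<open>w = Inl w'\<close> Inl nn q1 by (simp add: F_simps G_simps k1_def)
        next
          case False then have "y (Inl (Inl u)) = 0" using sp1 by blast
          then show ?thesis using \<open>w = Inl w'\<close> Inl False q1 k1 by (simp add: F_simps G_simps)
        qed
      next
        case (Inr u)
        show ?thesis
        proof (cases "u \<in> V2")
          case True then show ?thesis using \<open>w = Inl w'\<close> Inr nn q2 by (simp add: F_simps G_simps k2_def)
        next
          case False then have "y (Inl (Inr u)) = 0" using sp2 by blast
          then show ?thesis using \<open>w = Inl w'\<close> Inr False q2 k2 by (simp add: F_simps G_simps)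
        qed
      qed
    next
      case (Inr b)
      show ?thesis
      proof (cases b)
        case True
        have "F (Gm y) (Inr True) = (\<Sum>u\<in>V2. k2)"
          unfolding F_simps q2
        proof (rule sum.cong)
          fix u assume "u \<in> V2"
          moreover have "0 \<le> y (Inl (Inr u))" using nn by blast
          ultimately show "min (Gm y (Inr u)) k2 = k2" by (simp add: G_simps k2_def min_def)
        qed simp
        also have "\<dots> = y (Inr True)" using c2 by (simp add: k2_def)
        finally show ?thesis using Inr True by simp
      next
        case False
        have "F (Gm y) (Inr False) = (\<Sum>u\<in>V1. k1)"
          unfolding F_simps q1
        proof (rule sum.cong)
          fix u assume "u \<in> V1"
          moreover have "0 \<le> y (Inl (Inl u))" using nn by blast
          ultimately show "min (Gm y (Inl u)) k1 = k1" by (simp add: G_simps k1_def min_def)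
        qed simp
        also have "\<dots> = y (Inr False)" using c1 by (simp add: k1_def)
        finally show ?thesis using Inr False by simp
      qed
    qed
  qed
qed

lemma H_mem:
  assumes x: "x \<in> KK" and t: "0 \<le> t" "t \<le> 1"
  shows "(\<lambda>v. (1 - t) * x v + t * Gm (F x) v) \<in> KK"
proof -
  let ?z = "Gm (F x)"
  have z: "?z \<in> KK" using G_mem F_mem x by blast
  have nn: "\<forall>v. 0 \<le> x v" and sp: "\<forall>v. x v \<noteq> 0 \<longrightarrow> v \<in> dunion_V V1 V2"
    and sm: "sum (\<lambda>u. x (Inl u)) V1 + sum (\<lambda>u. x (Inr u)) V2 = 1"
    and ed: "(\<exists>e\<in>E1. \<forall>u\<in>e. x (Inl u) = 0) \<or> (\<exists>e\<in>E2. \<forall>u\<in>e. x (Inr u) = 0)"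
    using x memK by blast+
  have znn: "\<forall>v. 0 \<le> ?z v" and zsp: "\<forall>v. ?z v \<noteq> 0 \<longrightarrow> v \<in> dunion_V V1 V2"
    and zsm: "sum (\<lambda>u. ?z (Inl u)) V1 + sum (\<lambda>u. ?z (Inr u)) V2 = 1"
    using z memK by blast+
  have A: "\<forall>v. 0 \<le> (1 - t) * x v + t * ?z v"
    using nn znn t by (simp add: add_nonneg_nonneg)
  have B: "\<forall>v. (1 - t) * x v + t * ?z v \<noteq> 0 \<longrightarrow> v \<in> dunion_V V1 V2"
    using sp zsp by (metis add.right_neutral mult_zero_right)
  have C: "sum (\<lambda>u. (1 - t) * x (Inl u) + t * ?z (Inl u)) V1 + sum (\<lambda>u. (1 - t) * x (Inr u) + t * ?z (Inr u)) V2 = 1"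
  proof -
    have "sum (\<lambda>u. (1 - t) * x (Inl u) + t * ?z (Inl u)) V1 + sum (\<lambda>u. (1 - t) * x (Inr u) + t * ?z (Inr u)) V2
       = (1 - t) * (sum (\<lambda>u. x (Inl u)) V1 + sum (\<lambda>u. x (Inr u)) V2) + t * (sum (\<lambda>u. ?z (Inl u)) V1 + sum (\<lambda>u. ?z (Inr u)) V2)"
      by (simp only: lin) (simp add: algebra_simps)
    also have "\<dots> = 1" using sm zsm by simp
    finally show ?thesis .
  qed
  have q1: "0 \<le> qq Inl E1 x" using nn by (intro qq_ge[OF g1]) auto
  have q2: "0 \<le> qq Inr E2 x" using nn by (intro qq_ge[OF g2]) auto
  have D: "(\<exists>e\<in>E1. \<forall>u\<in>e. (1 - t) * x (Inl u) + t * ?z (Inl u) = 0) \<or> (\<exists>e\<in>E2. \<forall>u\<in>e. (1 - t) * x (Inr u) + t * ?z (Inr u) = 0)"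
    using ed
  proof
    assume "\<exists>e\<in>E1. \<forall>u\<in>e. x (Inl u) = 0"
    then obtain e where e: "e \<in> E1" "\<forall>u\<in>e. x (Inl u) = 0" by blast
    then have "qq Inl E1 x \<le> 0" by (intro qq_le[OF g1]) auto
    then have q: "qq Inl E1 x = 0" using q1 by simp
    have S: "F x (Inr False) = 0" using nn q by (simp add: F_simps min.absorb2)
    have "\<forall>u\<in>e. ?z (Inl u) = 0" using e q S by (simp add: G_simps F_simps)
    then have "\<exists>e\<in>E1. \<forall>u\<in>e. (1 - t) * x (Inl u) + t * ?z (Inl u) = 0"
      using e by (intro bexI[of _ e]) auto
    then show ?thesis by (rule disjI1)
  next
    assume "\<exists>e\<in>E2. \<forall>u\<in>e. x (Inr u) = 0"
    then obtain e where e: "e \<in> E2" "\<forall>u\<in>e. x (Inr u) = 0" by blast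
    then have "qq Inr E2 x \<le> 0" by (intro qq_le[OF g2]) auto
    then have q: "qq Inr E2 x = 0" using q2 by simp
    have S: "F x (Inr True) = 0" using nn q by (simp add: F_simps min.absorb2)
    have "\<forall>u\<in>e. ?z (Inr u) = 0" using e q S by (simp add: G_simps F_simps)
    then have "\<exists>e\<in>E2. \<forall>u\<in>e. (1 - t) * x (Inr u) + t * ?z (Inr u) = 0"
      using e by (intro bexI[of _ e]) auto
    then show ?thesis by (rule disjI2)
  qed
  show ?thesis unfolding memK using A B C D by blast
qed

lemma cont_F: "continuous_on A F"
proof (rule continuous_on_coordinatewise_then_product)
  fix w show "continuous_on A (\<lambda>x. F x w)"
  proof (cases w)
    case (Inl w') then show ?thesis
      by (cases w') (simp_all add: F_simps, (intro continuous_intros cont_coord cont_qq g1 g2)+)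
  next
    case (Inr b) then show ?thesis
      by (cases b) (simp_all add: F_simps, (intro continuous_intros cont_coord cont_qq g1 g2)+)
  qed
qed

lemma cont_G: "continuous_on A Gm"
proof (rule continuous_on_coordinatewise_then_product)
  fix v show "continuous_on A (\<lambda>x. Gm x v)"
  proof (cases v)
    case (Inl a) then show ?thesis
      using c1 by (cases "a \<in> V1") (auto simp: G_simps intro!: continuous_intros cont_coord)
  next
    case (Inr a) then show ?thesis
      using c2 by (cases "a \<in> V2") (auto simp: G_simps intro!: continuous_intros cont_coord)
  qed
qed

end


lemma twog_main:
  assumes "twog V1 E1 V2 E2"
  shows "geom_real (non_cover_complex (dunion_V V1 V2) (dunion_E E1 E2))
           homotopy_equivalent_space
         geom_real (csusp (cjoin (non_cover_complex V1 E1) (non_cover_complex V2 E2)))"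
proof -
  interpret twog V1 E1 V2 E2 by fact
  let ?F = F and ?G = Gm
  have cF: "continuous_map (top_of_set KK) (top_of_set SS) F"
    using cont_F F_mem by auto
  have cG: "continuous_map (top_of_set SS) (top_of_set KK) Gm"
    using cont_G G_mem by auto
  have h1: "homotopic_with (\<lambda>x. True) (top_of_set SS) (top_of_set SS) (F \<circ> Gm) id"
  proof (rule homotopic_with_equal)
    show "continuous_map (top_of_set SS) (top_of_set SS) (F \<circ> Gm)"
      using cF cG by (rule continuous_map_compose[rotated])
  qed (auto simp: FG)
  define h where "h = (\<lambda>p::real \<times> ('a + 'b \<Rightarrow> real). \<lambda>v. fst p * snd p v + (1 - fst p) * Gm (F (snd p)) v)"
  have cGF: "continuous_on KK (\<lambda>x. Gm (F x) v)" for v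
    by (rule continuous_on_product_then_coordinatewise, rule continuous_on_compose2[OF cont_G cont_F]) auto
  have ch: "continuous_on ({0..1} \<times> KK) h"
    unfolding h_def
  proof (rule continuous_on_coordinatewise_then_product)
    fix v
    have "continuous_on ({0..1} \<times> KK) (\<lambda>p. Gm (F (snd p)) v)"
      by (rule continuous_on_compose2[OF cGF[of v] continuous_on_snd]) auto
    then show "continuous_on ({0..1} \<times> KK) (\<lambda>p. fst p * snd p v + (1 - fst p) * Gm (F (snd p)) v)"
      by (intro continuous_intros continuous_on_compose2[OF cont_coord continuous_on_snd]) auto
  qed
  have hm: "h (t, x) \<in> KK" if "t \<in> {0..1}" "x \<in> KK" for t x
  proof -
    have "h (t, x) = (\<lambda>v. (1 - (1 - t)) * x v + (1 - t) * Gm (F x) v)" by (simp add: h_def)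
    then show ?thesis using H_mem[of x "1 - t"] that by simp
  qed
  have h2: "homotopic_with (\<lambda>x. True) (top_of_set KK) (top_of_set KK) (Gm \<circ> F) id"
  proof (subst homotopic_with, simp, intro exI conjI)
    show "continuous_map (prod_topology (top_of_set {0..1}) (top_of_set KK)) (top_of_set KK) h"
      using ch hm by auto
    show "\<forall>x\<in>topspace (top_of_set KK). h (0, x) = (Gm \<circ> F) x" by (simp add: h_def)
    show "\<forall>x\<in>topspace (top_of_set KK). h (1, x) = id x" by (simp add: h_def)
    show "\<forall>t\<in>{0..1}. True" by simp
  qed
  show ?thesis
    unfolding homotopy_equivalent_space_def geom_real_def
    using cF cG h1 h2 by blast
qed


lemma goodE_of:
  assumes "simple_graph V E" "E \<noteq> {}"
  shows "goodE E" "finite V" "\<forall>e\<in>E. e \<subseteq> V"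
proof -
  have fV: "finite V" and ed: "\<forall>e\<in>E. e \<subseteq> V \<and> card e = 2" using assms(1) unfolding simple_graph_def by auto
  have "finite E" using fV ed by (intro finite_subset[of E "Pow V"]) auto
  moreover have "\<forall>e\<in>E. finite e \<and> e \<noteq> {}"
  proof
    fix e assume "e \<in> E" then have "card e = 2" using ed by blast
    then show "finite e \<and> e \<noteq> {}" by (metis card.empty card.infinite zero_neq_numeral)
  qed
  ultimately show "goodE E" using assms(2) unfolding goodE_def by blast
  show "finite V" by fact
  show "\<forall>e\<in>E. e \<subseteq> V" using ed by blast
qed

theorem lemma4p1:
  fixes V1 :: "'a set" and E1 :: "'a set set" and V2 :: "'b set" and E2 :: "'b set set"
  assumes "simple_graph V1 E1" and "connected_graph V1 E1" and "E1 \<noteq> {}"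
      and "simple_graph V2 E2" and "connected_graph V2 E2" and "E2 \<noteq> {}"
  shows "geom_real (non_cover_complex (dunion_V V1 V2) (dunion_E E1 E2))
           homotopy_equivalent_space
         geom_real (csusp (cjoin (non_cover_complex V1 E1) (non_cover_complex V2 E2)))"
proof (rule twog_main)
  show "twog V1 E1 V2 E2"
    unfolding twog_def
    using goodE_of[OF assms(1,3)] goodE_of[OF assms(4,6)] assms(2,5)
    unfolding connected_graph_def by blast
qed

end
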